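(* Let $m$ be a positive integer, $n=2^m$, and let the dihedral group $D_n=\langle r,f\mid r^n=f^2=1,\ frf=r^{-1}\rangle$ act on $\{0,\dots,n-1\}$ by $r\cdot i=i+1 \bmod n$ and $f\cdot i=-i \bmod n$ (the symmetries of the vertices of a regular $n$-gon). Let $W:D_n\to U(\mathbb{C}^{2^m}\otimes\mathbb{C}^2)$ be the unitary representation $W(\sigma)\lvert i\rangle\otimes\lvert\alpha\rangle=\lvert\sigma\cdot i\rangle\otimes\lvert\alpha\rangle$ for $i\in\{0,\dots,n-1\}$, $\alpha\in\{0,1\}$. Let $D=\mathrm{diag}(e^{i\theta_0},\dots,e^{i\theta_{2^m-1}})$ acting on $\mathbb{C}^{2^m}$, with pairwise distinct phases $e^{i\theta_j}$. Let $\mathcal{Q}$ be the subgroup of $U(\mathbb{C}^{2^m}\otimes\mathbb{C}^2)$ generated by $\pm iI$, $I\otimes X$, $I\otimes Z$, $W(D_n)$ and $D\otimes I$, where $X,Z$ are the Pauli matrices on $\mathbb{C}^2$. Then every element of $U(\mathbb{C}^{2^m}\otimes\mathbb{C}^2)$ can be written as a complex linear combination of elements of $\mathcal{Q}$. *)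

theory Defs
  imports "Jordan_Normal_Form.Schur_Decomposition"
begin

(* Basis convention: |i> \<otimes> |alpha> of C^(2^m) \<otimes> C^2 is the standard basis
   vector e_(2*i + alpha) of C^(2^(m+1)); so i = k div 2, alpha = k mod 2. *)

definition unitary_mat :: "nat \<Rightarrow> complex mat \<Rightarrow> bool" where
  "unitary_mat N U \<longleftrightarrow> U \<in> carrier_mat N N \<and> U * mat_adjoint U = 1\<^sub>m N"

definition rot :: "nat \<Rightarrow> nat \<Rightarrow> nat" where
  "rot n i = (i + 1) mod n"

definition flip :: "nat \<Rightarrow> nat \<Rightarrow> nat" where
  "flip n i = nat ((- int i) mod int n)"

(* the image of D_n = <r,f> acting on {0..n-1}: generated by rot and flip *)
inductive_set dihedral_action :: "nat \<Rightarrow> (nat \<Rightarrow> nat) set" for n where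
  id: "id \<in> dihedral_action n"
| rot: "\<sigma> \<in> dihedral_action n \<Longrightarrow> rot n \<circ> \<sigma> \<in> dihedral_action n"
| flip: "\<sigma> \<in> dihedral_action n \<Longrightarrow> flip n \<circ> \<sigma> \<in> dihedral_action n"

definition W_rep :: "nat \<Rightarrow> (nat \<Rightarrow> nat) \<Rightarrow> complex mat" where
  "W_rep m \<sigma> = mat (2^(m+1)) (2^(m+1))
     (\<lambda>(a,b). if a div 2 = \<sigma> (b div 2) \<and> a mod 2 = b mod 2 then 1 else 0)"

definition IX :: "nat \<Rightarrow> complex mat" where
  "IX m = mat (2^(m+1)) (2^(m+1))
     (\<lambda>(a,b). if a div 2 = b div 2 \<and> a mod 2 \<noteq> b mod 2 then 1 else 0)"

definition IZ :: "nat \<Rightarrow> complex mat" where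
  "IZ m = mat (2^(m+1)) (2^(m+1))
     (\<lambda>(a,b). if a = b then (if a mod 2 = 0 then 1 else -1) else 0)"

definition DI :: "nat \<Rightarrow> (nat \<Rightarrow> real) \<Rightarrow> complex mat" where
  "DI m \<theta> = mat (2^(m+1)) (2^(m+1))
     (\<lambda>(a,b). if a = b then exp (\<i> * complex_of_real (\<theta> (a div 2))) else 0)"

inductive_set gen_subgroup :: "nat \<Rightarrow> complex mat set \<Rightarrow> complex mat set" for N G where
  one: "1\<^sub>m N \<in> gen_subgroup N G"
| gen: "A \<in> G \<Longrightarrow> A \<in> gen_subgroup N G"
| mult: "A \<in> gen_subgroup N G \<Longrightarrow> B \<in> gen_subgroup N G \<Longrightarrow> A * B \<in> gen_subgroup N G"
| inv: "A \<in> gen_subgroup N G \<Longrightarrow> mat_adjoint A \<in> gen_subgroup N G"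

inductive_set lin_span :: "nat \<Rightarrow> complex mat set \<Rightarrow> complex mat set" for N S where
  zero: "0\<^sub>m N N \<in> lin_span N S"
| elem: "A \<in> S \<Longrightarrow> A \<in> lin_span N S"
| add: "A \<in> lin_span N S \<Longrightarrow> B \<in> lin_span N S \<Longrightarrow> A + B \<in> lin_span N S"
| smult: "A \<in> lin_span N S \<Longrightarrow> c \<cdot>\<^sub>m A \<in> lin_span N S"

definition Q_group :: "nat \<Rightarrow> (nat \<Rightarrow> real) \<Rightarrow> complex mat set" where
  "Q_group m \<theta> = gen_subgroup (2^(m+1))
     ({\<i> \<cdot>\<^sub>m 1\<^sub>m (2^(m+1)), (-\<i>) \<cdot>\<^sub>m 1\<^sub>m (2^(m+1)), IX m, IZ m, DI m \<theta>}
      \<union> W_rep m ` dihedral_action (2^m))"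

end

theory Submission
  imports Defs
begin

lemma adj_carrier: "A \<in> carrier_mat N N \<Longrightarrow> mat_adjoint A \<in> carrier_mat N N"
  unfolding mat_adjoint_def by auto

lemma gen_carrier: assumes "G \<subseteq> carrier_mat N N" "A \<in> gen_subgroup N G" shows "A \<in> carrier_mat N N"
  using assms(2) by (induction rule: gen_subgroup.induct) (use assms(1) in \<open>auto intro: adj_carrier\<close>)

lemma span_carrier: assumes "S \<subseteq> carrier_mat N N" "A \<in> lin_span N S" shows "A \<in> carrier_mat N N"
  using assms(2) by (induction rule: lin_span.induct) (use assms(1) in auto)

lemma span_mult_gen:
  assumes G: "G \<subseteq> carrier_mat N N" and A: "A \<in> gen_subgroup N G" and B: "B \<in> lin_span N (gen_subgroup N G)"
  shows "A * B \<in> lin_span N (gen_subgroup N G)"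
  using B
proof (induction rule: lin_span.induct)
  case zero
  have "A * 0\<^sub>m N N = 0\<^sub>m N N" using gen_carrier[OF G A] by simp
  then show ?case by (simp add: lin_span.zero)
next
  case (elem B)
  then show ?case using A by (intro lin_span.elem gen_subgroup.mult)
next
  case (add B C)
  have c: "gen_subgroup N G \<subseteq> carrier_mat N N" using gen_carrier[OF G] by blast
  have "A * (B + C) = A * B + A * C"
    using gen_carrier[OF G A] span_carrier[OF c add(1)] span_carrier[OF c add(2)]
    by (simp add: mult_add_distrib_mat)
  then show ?case using add by (simp add: lin_span.add)
next
  case (smult B c)
  have cc: "gen_subgroup N G \<subseteq> carrier_mat N N" using gen_carrier[OF G] by blast
  have "A * (c \<cdot>\<^sub>m B) = c \<cdot>\<^sub>m (A * B)"
    using gen_carrier[OF G A] span_carrier[OF cc smult(1)] by (simp add: mult_smult_distrib)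
  then show ?case using smult by (simp add: lin_span.smult)
qed

lemma span_mult:
  assumes G: "G \<subseteq> carrier_mat N N" and A: "A \<in> lin_span N (gen_subgroup N G)" and B: "B \<in> lin_span N (gen_subgroup N G)"
  shows "A * B \<in> lin_span N (gen_subgroup N G)"
  using A
proof (induction rule: lin_span.induct)
  case zero
  have cc: "gen_subgroup N G \<subseteq> carrier_mat N N" using gen_carrier[OF G] by blast
  have "0\<^sub>m N N * B = 0\<^sub>m N N" using span_carrier[OF cc B] by simp
  then show ?case by (simp add: lin_span.zero)
next
  case (elem A)
  then show ?case using span_mult_gen[OF G _ B] by blast
next
  case (add A C)
  have c: "gen_subgroup N G \<subseteq> carrier_mat N N" using gen_carrier[OF G] by blast
  have "(A + C) * B = A * B + C * B"
    using span_carrier[OF c B] span_carrier[OF c add(1)] span_carrier[OF c add(2)]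
    by (simp add: add_mult_distrib_mat)
  then show ?case using add by (simp add: lin_span.add)
next
  case (smult A c)
  have cc: "gen_subgroup N G \<subseteq> carrier_mat N N" using gen_carrier[OF G] by blast
  have "(c \<cdot>\<^sub>m A) * B = c \<cdot>\<^sub>m (A * B)"
    using span_carrier[OF cc B] span_carrier[OF cc smult(1)] by (simp add: mult_smult_assoc_mat)
  then show ?case using smult by (simp add: lin_span.smult)
qed

definition dg :: "nat \<Rightarrow> (nat \<Rightarrow> complex) \<Rightarrow> complex mat" where
  "dg N f = mat N N (\<lambda>(a,b). if a = b then f a else 0)"

definition E :: "nat \<Rightarrow> nat \<Rightarrow> nat \<Rightarrow> complex mat" where
  "E N x y = mat N N (\<lambda>(a,b). if a = x \<and> b = y then 1 else 0)"

lemma dg_mult: "dg N f * dg N g = dg N (\<lambda>a. f a * g a)"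
proof (rule eq_matI)
  fix i j assume ij: "i < dim_row (dg N (\<lambda>a. f a * g a))" "j < dim_col (dg N (\<lambda>a. f a * g a))"
  hence i: "i < N" and j: "j < N" by (auto simp: dg_def)
  have "(dg N f * dg N g) $$ (i,j) = (\<Sum>l<N. (if i = l then f i else 0) * (if l = j then g l else 0))"
    using i j by (simp add: dg_def scalar_prod_def row_def col_def atLeast0LessThan)
  also have "\<dots> = (\<Sum>l\<in>{i}. (if i = l then f i else 0) * (if l = j then g l else 0))"
    by (rule sum.mono_neutral_right) (use i in auto)
  finally show "(dg N f * dg N g) $$ (i,j) = dg N (\<lambda>a. f a * g a) $$ (i,j)"
    using i j by (simp add: dg_def)
qed (auto simp: dg_def)

lemma dg_lin: "c \<cdot>\<^sub>m dg N f + dg N g = dg N (\<lambda>a. c * f a + g a)"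
  by (rule eq_matI) (auto simp: dg_def)

lemma dg_one: "1\<^sub>m N = dg N (\<lambda>_. 1)"
  by (rule eq_matI) (auto simp: dg_def)

lemma mult_E: assumes A: "A \<in> carrier_mat N N" and x: "x < N" and y: "y < N"
  shows "A * E N x y = mat N N (\<lambda>(a,c). if c = y then A $$ (a,x) else 0)"
proof (rule eq_matI)
  fix i j assume ij: "i < dim_row (mat N N (\<lambda>(a,c). if c = y then A $$ (a,x) else 0))"
     "j < dim_col (mat N N (\<lambda>(a,c). if c = y then A $$ (a,x) else 0))"
  hence i: "i < N" and j: "j < N" by auto
  have "(A * E N x y) $$ (i,j) = (\<Sum>l<N. A $$ (i,l) * (if l = x \<and> j = y then 1 else 0))"
    using i j A by (simp add: E_def scalar_prod_def row_def col_def atLeast0LessThan)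
  also have "\<dots> = (\<Sum>l\<in>{x}. A $$ (i,l) * (if l = x \<and> j = y then 1 else 0))"
    by (rule sum.mono_neutral_right) (use x in auto)
  finally show "(A * E N x y) $$ (i,j) = mat N N (\<lambda>(a,c). if c = y then A $$ (a,x) else 0) $$ (i,j)"
    using i j by simp
qed (use A in \<open>auto simp: E_def\<close>)


lemma dg_cong: "(\<And>a. a < N \<Longrightarrow> f a = g a) \<Longrightarrow> dg N f = dg N g"
  by (rule eq_matI) (auto simp: dg_def)

definition GS :: "nat \<Rightarrow> (nat \<Rightarrow> real) \<Rightarrow> complex mat set" where
  "GS m \<theta> = {\<i> \<cdot>\<^sub>m 1\<^sub>m (2^(m+1)), (-\<i>) \<cdot>\<^sub>m 1\<^sub>m (2^(m+1)), IX m, IZ m, DI m \<theta>}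
      \<union> W_rep m ` dihedral_action (2^m)"

lemma GS_carrier: "GS m \<theta> \<subseteq> carrier_mat (2^(m+1)) (2^(m+1))"
  by (auto simp: GS_def IX_def IZ_def DI_def W_rep_def)

lemma Q_eq: "Q_group m \<theta> = gen_subgroup (2^(m+1)) (GS m \<theta>)"
  by (simp add: Q_group_def GS_def)

lemma L_mult: "A \<in> lin_span (2^(m+1)) (Q_group m \<theta>) \<Longrightarrow> B \<in> lin_span (2^(m+1)) (Q_group m \<theta>)
   \<Longrightarrow> A * B \<in> lin_span (2^(m+1)) (Q_group m \<theta>)"
  unfolding Q_eq by (rule span_mult[OF GS_carrier])

lemma L_gen: "A \<in> GS m \<theta> \<Longrightarrow> A \<in> lin_span (2^(m+1)) (Q_group m \<theta>)"
  unfolding Q_eq by (intro lin_span.elem gen_subgroup.gen)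

lemma L_one: "dg (2^(m+1)) (\<lambda>_. 1) \<in> lin_span (2^(m+1)) (Q_group m \<theta>)"
  unfolding Q_eq dg_one[symmetric] by (intro lin_span.elem gen_subgroup.one)

lemma L_zero: "dg (2^(m+1)) (\<lambda>_. 0) \<in> lin_span (2^(m+1)) (Q_group m \<theta>)"
proof -
  have "dg (2^(m+1)) (\<lambda>_. 0) = 0\<^sub>m (2^(m+1)) (2^(m+1))" by (rule eq_matI) (auto simp: dg_def)
  thus ?thesis by (simp add: lin_span.zero)
qed

lemma L_lin: "dg (2^(m+1)) f \<in> lin_span (2^(m+1)) (Q_group m \<theta>) \<Longrightarrow> dg (2^(m+1)) g \<in> lin_span (2^(m+1)) (Q_group m \<theta>)
  \<Longrightarrow> dg (2^(m+1)) (\<lambda>a. c * f a + g a) \<in> lin_span (2^(m+1)) (Q_group m \<theta>)"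
  by (metis dg_lin lin_span.add lin_span.smult)

lemma L_DI: "dg (2^(m+1)) (\<lambda>a. exp (\<i> * complex_of_real (\<theta> (a div 2)))) \<in> lin_span (2^(m+1)) (Q_group m \<theta>)"
proof -
  have "DI m \<theta> = dg (2^(m+1)) (\<lambda>a. exp (\<i> * complex_of_real (\<theta> (a div 2))))"
    by (rule eq_matI) (auto simp: dg_def DI_def)
  thus ?thesis using L_gen[of "DI m \<theta>" m \<theta>] by (simp add: GS_def)
qed

lemma L_IZ: "dg (2^(m+1)) (\<lambda>a. if a mod 2 = 0 then 1 else -1) \<in> lin_span (2^(m+1)) (Q_group m \<theta>)"
proof -
  have "IZ m = dg (2^(m+1)) (\<lambda>a. if a mod 2 = 0 then 1 else -1)"
    by (rule eq_matI) (auto simp: dg_def IZ_def)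
  thus ?thesis using L_gen[of "IZ m" m \<theta>] by (simp add: GS_def)
qed

lemma L_factor: "dg (2^(m+1)) (\<lambda>a. \<alpha> * exp (\<i> * complex_of_real (\<theta> (a div 2))) + \<beta>) \<in> lin_span (2^(m+1)) (Q_group m \<theta>)"
proof -
  have "dg (2^(m+1)) (\<lambda>a. \<beta> * 1 + 0) \<in> lin_span (2^(m+1)) (Q_group m \<theta>)"
    by (rule L_lin[OF L_one L_zero])
  hence "dg (2^(m+1)) (\<lambda>a. \<beta>) \<in> lin_span (2^(m+1)) (Q_group m \<theta>)" by simp
  from L_lin[OF L_DI this, of \<alpha>] show ?thesis .
qed

lemma L_prod: "finite K \<Longrightarrow> dg (2^(m+1)) (\<lambda>a. \<Prod>k\<in>K. \<alpha> k * exp (\<i> * complex_of_real (\<theta> (a div 2))) + \<beta> k) \<in> lin_span (2^(m+1)) (Q_group m \<theta>)"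
proof (induction K rule: finite_induct)
  case empty
  then show ?case using L_one by simp
next
  case (insert k K)
  have "dg (2^(m+1)) (\<lambda>a. \<alpha> k * exp (\<i> * complex_of_real (\<theta> (a div 2))) + \<beta> k) *
        dg (2^(m+1)) (\<lambda>a. \<Prod>k\<in>K. \<alpha> k * exp (\<i> * complex_of_real (\<theta> (a div 2))) + \<beta> k)
     \<in> lin_span (2^(m+1)) (Q_group m \<theta>)"
    by (rule L_mult[OF L_factor insert.IH])
  then show ?case using insert.hyps by (simp add: dg_mult)
qed


lemma L_block:
  assumes dist: "\<forall>j < 2^m. \<forall>k < 2^m. j \<noteq> k \<longrightarrow>
           exp (\<i> * complex_of_real (\<theta> j)) \<noteq> exp (\<i> * complex_of_real (\<theta> k))"
    and j: "j < 2^m"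
  shows "dg (2^(m+1)) (\<lambda>a. if a div 2 = j then 1 else 0) \<in> lin_span (2^(m+1)) (Q_group m \<theta>)"
proof -
  define d where "d k = exp (\<i> * complex_of_real (\<theta> k))" for k
  define K where "K = {k. k < (2::nat)^m \<and> k \<noteq> j}"
  have fK: "finite K" unfolding K_def by auto
  have "dg (2^(m+1)) (\<lambda>a. \<Prod>k\<in>K. (1 / (d j - d k)) * d (a div 2) + (- d k / (d j - d k)))
     = dg (2^(m+1)) (\<lambda>a. if a div 2 = j then 1 else 0)"
  proof (rule dg_cong)
    fix a :: nat assume a: "a < 2^(m+1)"
    hence a2: "a div 2 < 2^m" by (simp add: less_mult_imp_div_less)
    show "(\<Prod>k\<in>K. (1 / (d j - d k)) * d (a div 2) + (- d k / (d j - d k))) = (if a div 2 = j then 1 else 0)"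
    proof (cases "a div 2 = j")
      case True
      have "(\<Prod>k\<in>K. (1 / (d j - d k)) * d (a div 2) + (- d k / (d j - d k))) = (\<Prod>k\<in>K. 1)"
      proof (rule prod.cong)
        fix k assume "k \<in> K"
        hence "d j \<noteq> d k" using dist j unfolding K_def d_def by auto
        hence ne: "d j - d k \<noteq> 0" by simp
        have "(1 / (d j - d k)) * d (a div 2) + (- d k / (d j - d k)) = d j / (d j - d k) - d k / (d j - d k)"
          using True by simp
        also have "\<dots> = 1" using ne by (simp add: diff_divide_distrib[symmetric])
        finally show "(1 / (d j - d k)) * d (a div 2) + (- d k / (d j - d k)) = 1" .
      qed simp
      thus ?thesis using True by simp
    next
      case False
      hence "a div 2 \<in> K" using a2 unfolding K_def by auto
      moreover have "(1 / (d j - d (a div 2))) * d (a div 2) + (- d (a div 2) / (d j - d (a div 2))) = 0"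
        by (simp add: field_simps)
      ultimately show ?thesis using False fK by (simp add: prod_zero_iff) blast
    qed
  qed
  moreover have "dg (2^(m+1)) (\<lambda>a. \<Prod>k\<in>K. (1 / (d j - d k)) * d (a div 2) + (- d k / (d j - d k)))
     \<in> lin_span (2^(m+1)) (Q_group m \<theta>)"
    using L_prod[OF fK, where \<alpha>="\<lambda>k. 1 / (d j - d k)" and \<theta>=\<theta> and \<beta>="\<lambda>k. - d k / (d j - d k)" and m=m] unfolding d_def .
  ultimately show ?thesis by simp
qed


lemma L_par: "p < 2 \<Longrightarrow> dg (2^(m+1)) (\<lambda>a. if a mod 2 = p then 1 else 0) \<in> lin_span (2^(m+1)) (Q_group m \<theta>)"
proof -
  assume p: "p < 2"
  have h: "dg (2^(m+1)) (\<lambda>a. (1/2) * 1 + 0) \<in> lin_span (2^(m+1)) (Q_group m \<theta>)"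
    by (rule L_lin[OF L_one L_zero])
  define s :: complex where "s = (if p = 0 then 1/2 else -1/2)"
  have "dg (2^(m+1)) (\<lambda>a. s * (if a mod 2 = 0 then 1 else -1) + ((1/2) * 1 + 0)) \<in> lin_span (2^(m+1)) (Q_group m \<theta>)"
    by (rule L_lin[OF L_IZ h])
  moreover have "dg (2^(m+1)) (\<lambda>a. s * (if a mod 2 = 0 then 1 else -1) + ((1/2) * 1 + 0))
     = dg (2^(m+1)) (\<lambda>a. if a mod 2 = p then 1 else 0)"
    by (rule dg_cong) (use p in \<open>auto simp: s_def\<close>)
  ultimately show ?thesis by simp
qed

lemma L_Ebb:
  assumes dist: "\<forall>j < 2^m. \<forall>k < 2^m. j \<noteq> k \<longrightarrow>
           exp (\<i> * complex_of_real (\<theta> j)) \<noteq> exp (\<i> * complex_of_real (\<theta> k))"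
    and b: "b < 2^(m+1)"
  shows "E (2^(m+1)) b b \<in> lin_span (2^(m+1)) (Q_group m \<theta>)"
proof -
  have b2: "b div 2 < 2^m" using b by (simp add: less_mult_imp_div_less)
  have "dg (2^(m+1)) (\<lambda>a. if a div 2 = b div 2 then 1 else 0) * dg (2^(m+1)) (\<lambda>a. if a mod 2 = b mod 2 then 1 else 0)
    \<in> lin_span (2^(m+1)) (Q_group m \<theta>)"
    by (rule L_mult[OF L_block[OF dist b2] L_par]) simp
  moreover have "dg (2^(m+1)) (\<lambda>a. if a div 2 = b div 2 then 1 else 0) * dg (2^(m+1)) (\<lambda>a. if a mod 2 = b mod 2 then 1 else 0)
     = E (2^(m+1)) b b"
    unfolding dg_mult
  proof (rule eq_matI)
    fix i j
    assume "i < dim_row (E (2 ^ (m + 1)) b b)" "j < dim_col (E (2 ^ (m + 1)) b b)"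
    hence ij: "i < 2^(m+1)" "j < 2^(m+1)" by (auto simp: E_def)
    have "(i div 2 = b div 2 \<and> i mod 2 = b mod 2) = (i = b)"
      by (metis div_mult_mod_eq)
    thus "dg (2 ^ (m + 1)) (\<lambda>a. (if a div 2 = b div 2 then 1 else 0) * (if a mod 2 = b mod 2 then 1 else 0)) $$ (i, j) =
         E (2 ^ (m + 1)) b b $$ (i, j)" using ij by (auto simp: dg_def E_def)
  qed (auto simp: dg_def E_def)
  ultimately show ?thesis by simp
qed

lemma rot_pow: "i < n \<Longrightarrow> (rot n ^^ k) i = (i + k) mod n"
  by (induction k) (auto simp: rot_def mod_Suc_eq)

lemma rot_pow_in: "rot n ^^ k \<in> dihedral_action n"
proof (induction k)
  case 0
  then show ?case using dihedral_action.id by (metis funpow_0 id_apply ext)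
next
  case (Suc k)
  then show ?case using dihedral_action.rot by (metis funpow.simps(2))
qed

lemma L_Eab:
  assumes dist: "\<forall>j < 2^m. \<forall>k < 2^m. j \<noteq> k \<longrightarrow>
           exp (\<i> * complex_of_real (\<theta> j)) \<noteq> exp (\<i> * complex_of_real (\<theta> k))"
    and a: "a < 2^(m+1)" and b: "b < 2^(m+1)"
  shows "E (2^(m+1)) a b \<in> lin_span (2^(m+1)) (Q_group m \<theta>)"
proof -
  let ?N = "2^(m+1) :: nat"
  have b2: "b div 2 < 2^m" using b by (simp add: less_mult_imp_div_less)
  have a2: "a div 2 < 2^m" using a by (simp add: less_mult_imp_div_less)
  define x where "x = 2 * (b div 2) + a mod 2"
  have x: "x < ?N" using b2 unfolding x_def by simp
  have xd: "x div 2 = b div 2" "x mod 2 = a mod 2" unfolding x_def by auto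
  have Ex: "E ?N x b \<in> lin_span ?N (Q_group m \<theta>)"
  proof (cases "a mod 2 = b mod 2")
    case True
    hence "x = b" unfolding x_def by (metis mult_div_mod_eq)
    thus ?thesis using L_Ebb[OF dist b] by simp
  next
    case False
    have IXc: "IX m \<in> carrier_mat ?N ?N" by (simp add: IX_def)
    have "IX m * E ?N b b \<in> lin_span ?N (Q_group m \<theta>)"
      by (rule L_mult[OF L_gen L_Ebb[OF dist b]]) (simp add: GS_def)
    moreover have "IX m * E ?N b b = E ?N x b"
      unfolding mult_E[OF IXc b b]
    proof (rule eq_matI)
      fix i j assume "i < dim_row (E ?N x b)" "j < dim_col (E ?N x b)"
      hence ij: "i < ?N" "j < ?N" by (auto simp: E_def)
      have "(i div 2 = b div 2 \<and> i mod 2 \<noteq> b mod 2) = (i = x)"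
        using False xd by (metis div_mult_mod_eq mod2_eq_if)
      thus "mat ?N ?N (\<lambda>(a, c). if c = b then IX m $$ (a, b) else 0) $$ (i, j) = E ?N x b $$ (i, j)"
        using ij b by (auto simp: IX_def E_def)
    qed (auto simp: E_def)
    ultimately show ?thesis by simp
  qed
  define \<sigma> where "\<sigma> = rot (2^m) ^^ (a div 2 + 2^m - b div 2)"
  have \<sigma>b: "\<sigma> (b div 2) = a div 2"
    unfolding \<sigma>_def using rot_pow[OF b2] b2 a2 by simp
  have Wc: "W_rep m \<sigma> \<in> carrier_mat ?N ?N" by (simp add: W_rep_def)
  have "W_rep m \<sigma> \<in> GS m \<theta>" unfolding GS_def \<sigma>_def using rot_pow_in by blast
  hence "W_rep m \<sigma> * E ?N x b \<in> lin_span ?N (Q_group m \<theta>)"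
    by (rule L_mult[OF L_gen Ex])
  moreover have "W_rep m \<sigma> * E ?N x b = E ?N a b"
    unfolding mult_E[OF Wc x b]
  proof (rule eq_matI)
    fix i j assume "i < dim_row (E ?N a b)" "j < dim_col (E ?N a b)"
    hence ij: "i < ?N" "j < ?N" by (auto simp: E_def)
    have "(i div 2 = \<sigma> (x div 2) \<and> i mod 2 = x mod 2) = (i = a)"
      using xd \<sigma>b by (metis div_mult_mod_eq)
    thus "mat ?N ?N (\<lambda>(a, c). if c = b then W_rep m \<sigma> $$ (a, x) else 0) $$ (i, j) = E ?N a b $$ (i, j)"
      using ij x by (auto simp: W_rep_def E_def)
  qed (auto simp: E_def)
  ultimately show ?thesis by simp
qed


lemma L_all:
  assumes dist: "\<forall>j < 2^m. \<forall>k < 2^m. j \<noteq> k \<longrightarrow>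
           exp (\<i> * complex_of_real (\<theta> j)) \<noteq> exp (\<i> * complex_of_real (\<theta> k))"
    and A: "A \<in> carrier_mat (2^(m+1)) (2^(m+1))"
  shows "A \<in> lin_span (2^(m+1)) (Q_group m \<theta>)"
proof -
  let ?N = "2^(m+1) :: nat"
  have gen: "mat ?N ?N (\<lambda>p. if p \<in> S then A $$ p else 0) \<in> lin_span ?N (Q_group m \<theta>)"
    if "finite S" "S \<subseteq> {..<?N} \<times> {..<?N}" for S
    using that
  proof (induction S rule: finite_induct)
    case empty
    have "mat ?N ?N (\<lambda>p. if p \<in> {} then A $$ p else 0) = 0\<^sub>m ?N ?N" by (rule eq_matI) auto
    then show ?case by (simp add: lin_span.zero)
  next
    case (insert p S)
    obtain a b where p: "p = (a,b)" by fastforce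
    have ab: "a < ?N" "b < ?N" using insert.prems p by auto
    have "A $$ (a,b) \<cdot>\<^sub>m E ?N a b + mat ?N ?N (\<lambda>p. if p \<in> S then A $$ p else 0) \<in> lin_span ?N (Q_group m \<theta>)"
      using insert by (intro lin_span.add lin_span.smult L_Eab[OF dist ab]) auto
    moreover have "A $$ (a,b) \<cdot>\<^sub>m E ?N a b + mat ?N ?N (\<lambda>p. if p \<in> S then A $$ p else 0)
       = mat ?N ?N (\<lambda>q. if q \<in> insert p S then A $$ q else 0)"
      by (rule eq_matI) (use insert.hyps p in \<open>auto simp: E_def\<close>)
    ultimately show ?case by simp
  qed
  have "mat ?N ?N (\<lambda>p. if p \<in> {..<?N} \<times> {..<?N} then A $$ p else 0) = A"
    by (rule eq_matI) (use A in auto)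
  thus ?thesis using gen[of "{..<?N} \<times> {..<?N}"] by simp
qed

theorem proposition4:
  fixes m :: nat and \<theta> :: "nat \<Rightarrow> real" and U :: "complex mat"
  assumes "m \<ge> 1"
    and "\<forall>j < 2^m. \<forall>k < 2^m. j \<noteq> k \<longrightarrow>
           exp (\<i> * complex_of_real (\<theta> j)) \<noteq> exp (\<i> * complex_of_real (\<theta> k))"
    and "unitary_mat (2^(m+1)) U"
  shows "U \<in> lin_span (2^(m+1)) (Q_group m \<theta>)"
  using L_all[OF assms(2)] assms(3) unfolding unitary_mat_def by blast

end
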